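(* Let $x^*\in\mathcal X$. If $\hat\eta_f(x^*,\hat{\mathbb Y}_d)=0$ for some $\hat{\mathbb Y}_d=\{y_d^1,\dots,y_d^k\}\subseteq\mathbb Y_d$, then $\eta_f(x^* )=0$, i.e. $x^*$ is feasible for $\mathcal U(x^* )$. If $r_f(x^*,u^* )>0$ for some $u^*\in\mathcal U(x^* )$, then $\eta_f(x^* )>0$, i.e. $x^*$ is infeasible for $\mathcal U(x^* )$.
   Context: $\mathcal X=\{x\in\mathbb R^{n_x}_+\times\mathbb Z^{m_x}_+: Ax\ge b\}$; $\mathcal U(x)=\{u\in\mathbb R^{n_u}_+: F(x)u\le h+Gx\}$, nonempty and bounded for $x\in\mathcal X$; $\mathcal Y(x,u)=\{(y_c,y_d)\in\mathbb R^{n_y}_+\times\mathbb Y_d: B_{2,c}y_c+B_{2,d}y_d\ge d-B_1x-Eu\}$, $\mathbb Y_d\subseteq\mathbb Z^{m_y}_+$ finite; $x$ is feasible for $\mathcal U(x)$ if $\mathcal Y(x,u)\ne\emptyset$ for all $u\in\mathcal U(x)$. $\tilde{\mathcal Y}(x,u)=\{(y_c,y_d,\tilde y): B_{2,c}y_c+B_{2,d}y_d+\mathbf1\tilde y\ge d-B_1x-Eu,\ y_c\ge0,\ y_d\in\mathbb Y_d,\ \tilde y\ge0\}$ ($\tilde y$ scalar). Define $\eta_f(x)=\max_{u\in\mathcal U(x)}\min\{\tilde y:(y_c,y_d,\tilde y)\in\tilde{\mathcal Y}(x,u)\}$; $r_f(x,u)=\min\{\tilde y:(y_c,y_d,\tilde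 y)\in\tilde{\mathcal Y}(x,u)\}$; and $\hat\eta_f(x,\hat{\mathbb Y}_d)=\max\{\hat\eta_f: u\in\mathcal U(x),\ \hat\eta_f\le\min\{\tilde y^t: B_{2,c}y_c^t+\mathbf1\tilde y^t\ge d-B_1x-Eu-B_{2,d}y_d^t,\ y_c^t\ge0,\ \tilde y^t\ge0\}\ \text{for } t=1,\dots,k\}$. *)

theory Defs
  imports "HOL-Analysis.Analysis"
begin

definition Xset :: "real^'x^'ra \<Rightarrow> real^'ra \<Rightarrow> 'x set \<Rightarrow> (real^'x) set" where
  "Xset A b Ix = {x. 0 \<le> x \<and> (\<forall>i\<in>Ix. x $ i \<in> \<int>) \<and> b \<le> A *v x}"

definition Uset :: "(real^'x \<Rightarrow> real^'u^'ru) \<Rightarrow> real^'ru \<Rightarrow> real^'x^'ru \<Rightarrow> real^'x \<Rightarrow> (real^'u) set" where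
  "Uset F h G x = {u. 0 \<le> u \<and> F x *v u \<le> h + G *v x}"

definition Yset :: "real^'x^'r \<Rightarrow> real^'u^'r \<Rightarrow> real^'yc^'r \<Rightarrow> real^'yd^'r \<Rightarrow> real^'r
     \<Rightarrow> (real^'yd) set \<Rightarrow> real^'x \<Rightarrow> real^'u \<Rightarrow> ((real^'yc) \<times> (real^'yd)) set" where
  "Yset B1 E B2c B2d d Yd x u =
     {(yc, yd). 0 \<le> yc \<and> yd \<in> Yd \<and> d - B1 *v x - E *v u \<le> B2c *v yc + B2d *v yd}"

definition feasible_for :: "(real^'x \<Rightarrow> real^'u^'ru) \<Rightarrow> real^'ru \<Rightarrow> real^'x^'ru \<Rightarrow>
     real^'x^'r \<Rightarrow> real^'u^'r \<Rightarrow> real^'yc^'r \<Rightarrow> real^'yd^'r \<Rightarrow> real^'r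
     \<Rightarrow> (real^'yd) set \<Rightarrow> real^'x \<Rightarrow> bool" where
  "feasible_for F h G B1 E B2c B2d d Yd x =
     (\<forall>u\<in>Uset F h G x. Yset B1 E B2c B2d d Yd x u \<noteq> {})"

definition Ytil :: "real^'x^'r \<Rightarrow> real^'u^'r \<Rightarrow> real^'yc^'r \<Rightarrow> real^'yd^'r \<Rightarrow> real^'r
     \<Rightarrow> (real^'yd) set \<Rightarrow> real^'x \<Rightarrow> real^'u \<Rightarrow> ((real^'yc) \<times> (real^'yd) \<times> real) set" where
  "Ytil B1 E B2c B2d d Yd x u =
     {(yc, yd, yt). 0 \<le> yc \<and> yd \<in> Yd \<and> 0 \<le> yt \<and>
        d - B1 *v x - E *v u \<le> B2c *v yc + B2d *v yd + yt *\<^sub>R (1::real^'r)}"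

definition r_f :: "real^'x^'r \<Rightarrow> real^'u^'r \<Rightarrow> real^'yc^'r \<Rightarrow> real^'yd^'r \<Rightarrow> real^'r
     \<Rightarrow> (real^'yd) set \<Rightarrow> real^'x \<Rightarrow> real^'u \<Rightarrow> real" where
  "r_f B1 E B2c B2d d Yd x u = Inf ((\<lambda>(yc, yd, yt). yt) ` Ytil B1 E B2c B2d d Yd x u)"

definition eta_f :: "(real^'x \<Rightarrow> real^'u^'ru) \<Rightarrow> real^'ru \<Rightarrow> real^'x^'ru \<Rightarrow>
     real^'x^'r \<Rightarrow> real^'u^'r \<Rightarrow> real^'yc^'r \<Rightarrow> real^'yd^'r \<Rightarrow> real^'r
     \<Rightarrow> (real^'yd) set \<Rightarrow> real^'x \<Rightarrow> real" where
  "eta_f F h G B1 E B2c B2d d Yd x = Sup (r_f B1 E B2c B2d d Yd x ` Uset F h G x)"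

definition lp_val :: "real^'x^'r \<Rightarrow> real^'u^'r \<Rightarrow> real^'yc^'r \<Rightarrow> real^'yd^'r \<Rightarrow> real^'r
     \<Rightarrow> real^'x \<Rightarrow> real^'u \<Rightarrow> real^'yd \<Rightarrow> real" where
  "lp_val B1 E B2c B2d d x u yd =
     Inf {yt. \<exists>yc. 0 \<le> yc \<and> 0 \<le> yt \<and>
        d - B1 *v x - E *v u - B2d *v yd \<le> B2c *v yc + yt *\<^sub>R (1::real^'r)}"

definition eta_hat :: "(real^'x \<Rightarrow> real^'u^'ru) \<Rightarrow> real^'ru \<Rightarrow> real^'x^'ru \<Rightarrow>
     real^'x^'r \<Rightarrow> real^'u^'r \<Rightarrow> real^'yc^'r \<Rightarrow> real^'yd^'r \<Rightarrow> real^'r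
     \<Rightarrow> real^'x \<Rightarrow> (real^'yd) set \<Rightarrow> real" where
  "eta_hat F h G B1 E B2c B2d d x Yhat =
     Sup {e. \<exists>u\<in>Uset F h G x. \<forall>yd\<in>Yhat. e \<le> lp_val B1 E B2c B2d d x u yd}"

end

theory Submission imports Defs begin

lemma cc_sum:
  assumes "convex_cone C" "finite I" "\<forall>i\<in>I. 0 \<le> c i \<and> v i \<in> C"
  shows "(\<Sum>i\<in>I. c i *\<^sub>R v i) \<in> C"
  using assms(2,3)
proof (induction I rule: finite_induct)
  case empty then show ?case using assms(1) by (simp add: convex_cone_iff)
next
  case (insert x F)
  then show ?case using assms(1) by (simp add: convex_cone_iff)
qed

lemma cone_closed:
  fixes M :: "real^'n^'m"
  shows "closed {z. \<exists>y\<ge>0. z \<le> M *v y}"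
proof -
  define S where "S = range (\<lambda>j. column j M) \<union> range (\<lambda>i. - (axis i 1 :: real^'m))"
  have fS: "finite S" unfolding S_def by simp
  have cK: "convex_cone {z. \<exists>y\<ge>0. z \<le> M *v y}"
    unfolding convex_cone_iff
  proof (intro conjI ballI allI impI)
    show "0 \<in> {z. \<exists>y\<ge>0. z \<le> M *v y}" by (auto intro!: exI[of _ 0])
  next
    fix a b assume "a \<in> {z. \<exists>y\<ge>0. z \<le> M *v y}" "b \<in> {z. \<exists>y\<ge>0. z \<le> M *v y}"
    then obtain ya yb where "ya \<ge> 0" "a \<le> M *v ya" "yb \<ge> 0" "b \<le> M *v yb" by auto
    then show "a + b \<in> {z. \<exists>y\<ge>0. z \<le> M *v y}"
      by (auto intro!: exI[of _ "ya + yb"] add_mono simp: matrix_vector_right_distrib)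
  next
    fix a and c :: real assume "a \<in> {z. \<exists>y\<ge>0. z \<le> M *v y}" "0 \<le> c"
    then obtain ya where "ya \<ge> 0" "a \<le> M *v ya" by auto
    then show "c *\<^sub>R a \<in> {z. \<exists>y\<ge>0. z \<le> M *v y}"
      using \<open>0 \<le> c\<close>
      by (auto intro!: exI[of _ "c *\<^sub>R ya"] mult_left_mono simp: matrix_vector_mult_scaleR less_eq_vec_def)
  qed
  have SK: "S \<subseteq> {z. \<exists>y\<ge>0. z \<le> M *v y}"
  proof
    fix s assume "s \<in> S"
    then show "s \<in> {z. \<exists>y\<ge>0. z \<le> M *v y}"
      unfolding S_def
    proof
      assume "s \<in> range (\<lambda>j. column j M)"
      then obtain j where "s = column j M" by auto
      then have "s = M *v axis j 1"
        by (simp add: vec_eq_iff matrix_vector_mult_def column_def axis_def if_distrib sum.If_cases cong del: if_weak_cong)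
      moreover have "(0::real^'n) \<le> axis j 1" by (simp add: less_eq_vec_def axis_def)
      ultimately show ?thesis by blast
    next
      assume "s \<in> range (\<lambda>i. - (axis i 1 :: real^'m))"
      then obtain i where "s = - axis i 1" by auto
      then show ?thesis by (auto intro!: exI[of _ 0] simp: less_eq_vec_def axis_def)
    qed
  qed
  have "{z. \<exists>y\<ge>0. z \<le> M *v y} = convex_cone hull S"
  proof
    show "convex_cone hull S \<subseteq> {z. \<exists>y\<ge>0. z \<le> M *v y}"
      by (rule hull_minimal[where S=convex_cone, OF SK cK])
  next
    show "{z. \<exists>y\<ge>0. z \<le> M *v y} \<subseteq> convex_cone hull S"
    proof
      fix z assume "z \<in> {z. \<exists>y\<ge>0. z \<le> M *v y}"
      then obtain y where y: "y \<ge> 0" "z \<le> M *v y" by auto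
      have cch: "convex_cone (convex_cone hull S)" by (simp add: convex_cone_convex_cone_hull)
      have e: "z = (\<Sum>j\<in>UNIV. (y$j) *\<^sub>R column j M) + (\<Sum>i\<in>UNIV. ((M *v y - z)$i) *\<^sub>R (- axis i 1))"
      proof -
        have "(\<Sum>j\<in>UNIV. (y$j) *\<^sub>R column j M) = M *v y"
          by (simp add: matrix_mult_sum scalar_mult_eq_scaleR)
        moreover have "(\<Sum>i\<in>UNIV. ((M *v y - z)$i) *\<^sub>R (- axis i 1)) = - (M *v y - z)"
          using basis_expansion[of "M *v y - z"]
          by (simp add: scalar_mult_eq_scaleR sum_negf)
        ultimately show ?thesis by simp
      qed
      have "(\<Sum>j\<in>UNIV. (y$j) *\<^sub>R column j M) \<in> convex_cone hull S"
        using y(1) by (intro cc_sum[OF cch]) (auto simp: less_eq_vec_def S_def intro: hull_inc)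
      moreover have "(\<Sum>i\<in>UNIV. ((M *v y - z)$i) *\<^sub>R (- axis i 1)) \<in> convex_cone hull S"
        using y(2) by (intro cc_sum[OF cch]) (auto simp: less_eq_vec_def S_def intro: hull_inc)
      ultimately show "z \<in> convex_cone hull S"
        by (subst e) (rule convex_cone_add[OF cch])
    qed
  qed
  then show ?thesis using closed_convex_cone_hull[OF fS] by simp
qed
theorem corollary26:
  fixes A :: "real^'x^'ra" and b :: "real^'ra" and Ix :: "'x set"
    and F :: "real^'x \<Rightarrow> real^'u^'ru" and h :: "real^'ru" and G :: "real^'x^'ru"
    and B1 :: "real^'x^'r" and E :: "real^'u^'r" and B2c :: "real^'yc^'r" and B2d :: "real^'yd^'r"
    and d :: "real^'r" and Yd :: "(real^'yd) set" and xs :: "real^'x"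
  assumes Yd_fin: "finite Yd"
    and Yd_int: "\<forall>yd\<in>Yd. 0 \<le> yd \<and> (\<forall>j. yd $ j \<in> \<int>)"
    and U_ne: "\<forall>x\<in>Xset A b Ix. Uset F h G x \<noteq> {}"
    and U_bdd: "\<forall>x\<in>Xset A b Ix. bounded (Uset F h G x)"
    and xs_X: "xs \<in> Xset A b Ix"
  shows "(\<forall>Yhat. finite Yhat \<and> Yhat \<noteq> {} \<and> Yhat \<subseteq> Yd \<and>
              eta_hat F h G B1 E B2c B2d d xs Yhat = 0 \<longrightarrow>
            eta_f F h G B1 E B2c B2d d Yd xs = 0 \<and> feasible_for F h G B1 E B2c B2d d Yd xs)
       \<and> (\<forall>us\<in>Uset F h G xs. r_f B1 E B2c B2d d Yd xs us > 0 \<longrightarrow>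
            eta_f F h G B1 E B2c B2d d Yd xs > 0 \<and> \<not> feasible_for F h G B1 E B2c B2d d Yd xs)"
proof -
  let ?U = "Uset F h G xs"
  define w where "w u yd = d - B1 *v xs - E *v u - B2d *v yd" for u yd
  define L where "L u yd = {yt. \<exists>yc. 0 \<le> yc \<and> 0 \<le> yt \<and> w u yd \<le> B2c *v yc + yt *\<^sub>R (1::real^'r)}" for u yd
  have lp: "lp_val B1 E B2c B2d d xs u yd = Inf (L u yd)" for u yd
    by (simp add: lp_val_def L_def w_def)
  have Req: "(\<lambda>(yc, yd, yt). yt) ` Ytil B1 E B2c B2d d Yd xs u = (\<Union>yd\<in>Yd. L u yd)" for u
  proof -
    have key: "(d - B1 *v xs - E *v u \<le> B2c *v yc + B2d *v yd + yt *\<^sub>R (1::real^'r)) =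
               (w u yd \<le> B2c *v yc + yt *\<^sub>R 1)" for yc yd yt
      by (simp add: w_def less_eq_vec_def algebra_simps)
    show ?thesis
    proof (rule set_eqI)
      fix t
      show "t \<in> (\<lambda>(yc, yd, yt). yt) ` Ytil B1 E B2c B2d d Yd xs u \<longleftrightarrow> t \<in> (\<Union>yd\<in>Yd. L u yd)"
      proof
        assume "t \<in> (\<lambda>(yc, yd, yt). yt) ` Ytil B1 E B2c B2d d Yd xs u"
        then obtain yc yd where "(yc, yd, t) \<in> Ytil B1 E B2c B2d d Yd xs u" by force
        then show "t \<in> (\<Union>yd\<in>Yd. L u yd)" unfolding Ytil_def L_def key by blast
      next
        assume "t \<in> (\<Union>yd\<in>Yd. L u yd)"
        then obtain yd yc where "yd \<in> Yd" "0 \<le> yc" "0 \<le> t" "w u yd \<le> B2c *v yc + t *\<^sub>R 1"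
          unfolding L_def by blast
        then have "(yc, yd, t) \<in> Ytil B1 E B2c B2d d Yd xs u" unfolding Ytil_def key by blast
        then show "t \<in> (\<lambda>(yc, yd, yt). yt) ` Ytil B1 E B2c B2d d Yd xs u" by force
      qed
    qed
  qed
  have rf: "r_f B1 E B2c B2d d Yd xs u = Inf (\<Union>yd\<in>Yd. L u yd)" for u
    by (simp add: r_f_def Req)
  have L1: "norm (w u yd) \<in> L u yd" for u yd
  proof -
    have "w u yd \<le> B2c *v 0 + norm (w u yd) *\<^sub>R (1::real^'r)"
      using component_le_norm_cart[of "w u yd"] by (simp add: less_eq_vec_def abs_le_iff)
    then show ?thesis unfolding L_def by (auto intro!: exI[of _ 0])
  qed
  have L0: "t \<in> L u yd \<Longrightarrow> 0 \<le> t" for t u yd by (auto simp: L_def)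
  have Lb: "bdd_below (L u yd)" for u yd using L0 by (auto simp: bdd_below_def)
  have Ub: "bdd_below (\<Union>yd\<in>Yd. L u yd)" for u
    by (rule bdd_belowI[of _ 0]) (use L0 in blast)
  have Lne: "L u yd \<noteq> {}" for u yd using L1 by auto
  have Lcl: "closed (L u yd)" for u yd
  proof -
    have "L u yd = {0..} \<inter> (\<lambda>t. w u yd - t *\<^sub>R (1::real^'r)) -` {z. \<exists>y\<ge>0. z \<le> B2c *v y}"
      unfolding L_def by (auto simp: less_eq_vec_def algebra_simps)
    moreover have "closed ((\<lambda>t. w u yd - t *\<^sub>R (1::real^'r)) -` {z. \<exists>y\<ge>0. z \<le> B2c *v y})"
      by (rule closed_vimage[OF cone_closed]) (intro continuous_intros)
    ultimately show ?thesis by (simp add: closed_Int)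
  qed
  have Lin: "Inf (L u yd) \<in> L u yd" for u yd
    using closed_contains_Inf[OF Lne Lb Lcl] .
  have lp0: "0 \<le> lp_val B1 E B2c B2d d xs u yd" for u yd
    unfolding lp using Lin L0 by blast
  have lpn: "lp_val B1 E B2c B2d d xs u yd \<le> norm (w u yd)" for u yd
    unfolding lp by (rule cInf_lower[OF L1 Lb])
  obtain BE where BE: "\<forall>u\<in>?U. norm (E *v u) \<le> BE"
    using bounded_linear_image[OF U_bdd[rule_format, OF xs_X] matrix_vector_mul_bounded_linear[of E]]
    unfolding bounded_iff by blast
  define C where "C = norm (d - B1 *v xs) + BE + (\<Sum>yd\<in>Yd. norm (B2d *v yd))"
  have wC: "norm (w u yd) \<le> C" if "u \<in> ?U" "yd \<in> Yd" for u yd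
  proof -
    have "norm (w u yd) \<le> norm (d - B1 *v xs) + norm (E *v u) + norm (B2d *v yd)"
      using norm_triangle_ineq4[of "d - B1 *v xs - E *v u" "B2d *v yd"]
        norm_triangle_ineq4[of "d - B1 *v xs" "E *v u"] unfolding w_def by linarith
    moreover have "norm (B2d *v yd) \<le> (\<Sum>yd\<in>Yd. norm (B2d *v yd))"
      using that(2) Yd_fin by (intro member_le_sum) auto
    ultimately show ?thesis using BE that(1) unfolding C_def by fastforce
  qed
  have lpC: "lp_val B1 E B2c B2d d xs u yd \<le> C" if "u \<in> ?U" "yd \<in> Yd" for u yd
    using lpn[of u yd] wC[OF that] by linarith
  have rfle: "r_f B1 E B2c B2d d Yd xs u \<le> lp_val B1 E B2c B2d d xs u yd" if "yd \<in> Yd" for u yd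
    unfolding rf lp
    by (rule cInf_superset_mono[OF Lne Ub]) (use that in blast)
  have rf0: "0 \<le> r_f B1 E B2c B2d d Yd xs u" if "Yd \<noteq> {}" for u
    unfolding rf using that Lne L0 by (intro cInf_greatest) auto
  have Une: "?U \<noteq> {}" using U_ne xs_X by auto
  have part1: "eta_f F h G B1 E B2c B2d d Yd xs = 0 \<and> feasible_for F h G B1 E B2c B2d d Yd xs"
    if Y: "finite Yhat" "Yhat \<noteq> {}" "Yhat \<subseteq> Yd" "eta_hat F h G B1 E B2c B2d d xs Yhat = 0" for Yhat
  proof -
    define SS where "SS = {e. \<exists>u\<in>?U. \<forall>yd\<in>Yhat. e \<le> lp_val B1 E B2c B2d d xs u yd}"
    obtain yd0 where yd0: "yd0 \<in> Yhat" using Y(2) by auto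
    have "bdd_above SS"
    proof (rule bdd_aboveI)
      fix e assume "e \<in> SS"
      then obtain u where u: "u \<in> ?U" "\<forall>yd\<in>Yhat. e \<le> lp_val B1 E B2c B2d d xs u yd"
        unfolding SS_def by blast
      then have "e \<le> lp_val B1 E B2c B2d d xs u yd0" using yd0 by blast
      moreover have "lp_val B1 E B2c B2d d xs u yd0 \<le> C" using lpC u(1) yd0 Y(3) by blast
      ultimately show "e \<le> C" by linarith
    qed
    have ex: "\<exists>yd\<in>Yhat. lp_val B1 E B2c B2d d xs u yd \<le> 0" if "u \<in> ?U" for u
    proof -
      let ?m = "Min ((\<lambda>yd. lp_val B1 E B2c B2d d xs u yd) ` Yhat)"
      have "?m \<in> SS" unfolding SS_def using that Y(1) by (auto intro!: bexI[of _ u])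
      then have "?m \<le> Sup SS" by (rule cSup_upper[OF _ \<open>bdd_above SS\<close>])
      moreover have "Sup SS = 0" using Y(4) by (simp add: eta_hat_def SS_def)
      moreover have "?m \<in> (\<lambda>yd. lp_val B1 E B2c B2d d xs u yd) ` Yhat"
        using Y(1,2) by (intro Min_in) auto
      ultimately show ?thesis by auto
    qed
    have r0: "r_f B1 E B2c B2d d Yd xs u = 0" if uU: "u \<in> ?U" for u
    proof -
      obtain yd where "yd \<in> Yhat" "lp_val B1 E B2c B2d d xs u yd \<le> 0" using ex[OF uU] by blast
      then show ?thesis using rfle[of yd u] rf0[of u] Y(3) by force
    qed
    have "r_f B1 E B2c B2d d Yd xs ` ?U = {0}" using r0 Une by auto
    then have "eta_f F h G B1 E B2c B2d d Yd xs = 0" by (simp add: eta_f_def)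
    moreover have "feasible_for F h G B1 E B2c B2d d Yd xs"
      unfolding feasible_for_def
    proof
      fix u assume u: "u \<in> ?U"
      obtain yd where yd: "yd \<in> Yhat" "lp_val B1 E B2c B2d d xs u yd \<le> 0" using ex u by blast
      then have "lp_val B1 E B2c B2d d xs u yd = 0" using lp0 by (meson order_antisym)
      then have "0 \<in> L u yd" using Lin lp by metis
      then obtain yc where yc: "0 \<le> yc" "w u yd \<le> B2c *v yc" unfolding L_def by auto
      have "(yc, yd) \<in> Yset B1 E B2c B2d d Yd xs u"
        using yc yd Y(3) unfolding Yset_def by (auto simp: w_def less_eq_vec_def algebra_simps)
      then show "Yset B1 E B2c B2d d Yd xs u \<noteq> {}" by auto
    qed
    ultimately show ?thesis by simp
  qed
  have part2: "eta_f F h G B1 E B2c B2d d Yd xs > 0 \<and> \<not> feasible_for F h G B1 E B2c B2d d Yd xs"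
    if us: "us \<in> ?U" "r_f B1 E B2c B2d d Yd xs us > 0" for us
  proof -
    have "bdd_above (r_f B1 E B2c B2d d Yd xs ` ?U)"
    proof (cases "Yd = {}")
      case True
      then have "r_f B1 E B2c B2d d Yd xs ` ?U \<subseteq> {Inf {}}" unfolding rf using True by auto
      then show ?thesis by (meson bdd_above_empty bdd_above_insert bdd_above_mono)
    next
      case False
      then obtain yd0 where "yd0 \<in> Yd" by auto
      then have yd0: "yd0 \<in> Yd" .
      show ?thesis
      proof (rule bdd_aboveI)
        fix r assume "r \<in> r_f B1 E B2c B2d d Yd xs ` ?U"
        then obtain u where u: "u \<in> ?U" "r = r_f B1 E B2c B2d d Yd xs u" by blast
        show "r \<le> C" using rfle[OF yd0, of u] lpC[OF u(1) yd0] u(2) by linarith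
      qed
    qed
    then have "r_f B1 E B2c B2d d Yd xs us \<le> eta_f F h G B1 E B2c B2d d Yd xs"
      unfolding eta_f_def using us(1) by (intro cSup_upper) auto
    then have "eta_f F h G B1 E B2c B2d d Yd xs > 0" using us(2) by linarith
    moreover have "\<not> feasible_for F h G B1 E B2c B2d d Yd xs"
    proof
      assume "feasible_for F h G B1 E B2c B2d d Yd xs"
      then obtain yc yd where "(yc, yd) \<in> Yset B1 E B2c B2d d Yd xs us"
        using us(1) unfolding feasible_for_def by fast
      then have yy: "0 \<le> yc" "yd \<in> Yd" "d - B1 *v xs - E *v us \<le> B2c *v yc + B2d *v yd"
        unfolding Yset_def by auto
      have "0 \<in> L us yd" unfolding L_def using yy
        by (auto intro!: exI[of _ yc] simp: w_def less_eq_vec_def algebra_simps)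
      then have "r_f B1 E B2c B2d d Yd xs us \<le> 0" unfolding rf
        using yy(2) by (intro cInf_lower[OF _ Ub]) blast
      then show False using us(2) by linarith
    qed
    ultimately show ?thesis by simp
  qed
  show ?thesis using part1 part2 by blast
qed

end
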